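(* Let $d\geq 1$ be odd, and let $Q$ be a real hyperbolic polynomial of degree $d$ with positive leading coefficient and nonzero constant term. - If $Q$ defines the moduli order admitting equalities $r_{PP}^0$, then all coefficients of $Q$ are nonzero and $Q$ defines the sign pattern $\Sigma_-$. - If $Q$ defines $r_{NN}^0$, then all coefficients of $Q$ are nonzero and $Q$ defines the sign pattern $\Sigma_+$.
   Context: A hyperbolic polynomial (HP) is a real univariate polynomial all of whose roots are real. A moduli order admitting equalities (MOAE) of length $d$ is a string of $d$ letters $P$/$N$ separated by $\leq$. A HP $Q$ of degree $d$ with nonzero constant term defines such a string if its $d$ roots, counted with multiplicity, can be listed as $z_1,\dots,z_d$ with $|z_1|\leq|z_2|\leq\dots\leq|z_d|$, where $z_i>0$ when the $i$-th letter is $P$ and $z_i<0$ when it is $N$. $r_{PP}^0$ is the alternating string $P\leq N\leq P\leq N\leq\dots\leq P$ (odd length, beginning and ending with $P$). $r_{NN}^0$ is $N\leq P\leq N\leq\dots\leq N$ (odd length, beginning and ending with $N$). The sign pattern of a polynomial $a_dx^d+\dots+a_0$ with all $a_j\neq 0$ is $(\mathrm{sgn}(a_d),\dots,\mathrm{sgn}(a_0))$. $\Sigma_+=(+,+,-,-,+,+,-,-,\dots)$ has entry $+$ in position $k$ ($k=0,\dots,d$, i.e. the sign of the coefficient of $x^{d-k}$) iff $k\equiv0,1\pmod 4$. $\Sigma_-=(+,-,-,+,+,-,-,+,\dots)$ has entry $+$ in position $k$ iff $k\equiv 0,3\pmod 4$. *)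

theory Defs
  imports "HOL-Computational_Algebra.Polynomial"
begin

definition hyperbolic :: "real poly \<Rightarrow> bool" where
  "hyperbolic Q \<longleftrightarrow> Q \<noteq> 0 \<and>
     (\<forall>z::complex. poly (map_poly of_real Q) z = 0 \<longrightarrow> z \<in> \<real>)"

datatype letter = P | N

text \<open>A MOAE of length d is represented by its list of d letters (the separators are
all \<le>, hence carry no information).\<close>

definition defines_moae :: "real poly \<Rightarrow> letter list \<Rightarrow> bool" where
  "defines_moae Q w \<longleftrightarrow>
     (\<exists>zs :: real list. length zs = length w \<and>
        (\<forall>x. count (mset zs) x = order x Q) \<and>
        sorted (map abs zs) \<and>
        (\<forall>i < length w. (w ! i = P \<longrightarrow> zs ! i > 0) \<and> (w ! i = N \<longrightarrow> zs ! i < 0)))"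

definition r_PP0 :: "nat \<Rightarrow> letter list" where
  "r_PP0 d = map (\<lambda>i. if even i then P else N) [0..<d]"

definition r_NN0 :: "nat \<Rightarrow> letter list" where
  "r_NN0 d = map (\<lambda>i. if even i then N else P) [0..<d]"

definition sign_pattern :: "real poly \<Rightarrow> real list" where
  "sign_pattern Q = map (\<lambda>k. sgn (coeff Q (degree Q - k))) [0..<degree Q + 1]"

definition Sigma_plus :: "nat \<Rightarrow> real list" where
  "Sigma_plus d = map (\<lambda>k. if k mod 4 = 0 \<or> k mod 4 = 1 then 1 else -1) [0..<d + 1]"

definition Sigma_minus :: "nat \<Rightarrow> real list" where
  "Sigma_minus d = map (\<lambda>k. if k mod 4 = 0 \<or> k mod 4 = 3 then 1 else -1) [0..<d + 1]"

end

theory Submission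
  imports Defs
begin

lemma order_lin: "order x [:-z,1::real:] = (if x = z then 1 else 0)"
proof (cases "x = z")
  case True then show ?thesis using order_power_n_n[of z 1] by simp
next
  case False then show ?thesis by (simp add: order_0I)
qed

lemma factor_roots:
  fixes Q :: "real poly"
  assumes "\<forall>x. count (mset zs) x = order x Q" "length zs = degree Q" "Q \<noteq> 0"
  shows "Q = smult (lead_coeff Q) (prod_list (map (\<lambda>z. [:-z,1:]) zs))"
  using assms
proof (induction zs arbitrary: Q)
  case Nil
  then show ?case using degree_0_id[of Q] by simp
next
  case (Cons z zs)
  have "order z Q \<noteq> 0" using Cons.prems(1)[rule_format, of z] by simp
  then have "poly Q z = 0" using order_root by blast
  then obtain Q' where Q': "Q = [:-z,1:] * Q'" using poly_eq_0_iff_dvd by blast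
  have nz: "Q' \<noteq> 0" using Cons.prems(3) Q' by auto
  have ord: "count (mset zs) x = order x Q'" for x
  proof -
    have "order x Q = order x [:-z,1:] + order x Q'"
      using Q' Cons.prems(3) order_mult by metis
    then show ?thesis using Cons.prems(1)[rule_format, of x] by (auto simp: order_lin split: if_splits)
  qed
  have "degree Q = degree [:-z,1::real:] + degree Q'" unfolding Q' using nz by (intro degree_mult_eq) auto
  then have deg: "degree Q = 1 + degree Q'" by simp
  have lc: "lead_coeff Q = lead_coeff Q'" unfolding Q' lead_coeff_mult by simp
  have IH: "Q' = smult (lead_coeff Q') (prod_list (map (\<lambda>z. [:-z,1:]) zs))"
    using Cons.IH[of Q'] ord deg Cons.prems(2) nz by simp
  have Qeq: "Q = [:-z,1:] * smult (lead_coeff Q') (prod_list (map (\<lambda>z. [:-z,1:]) zs))"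
    using Q' IH by simp
  have e: "smult (lead_coeff Q) (prod_list (map (\<lambda>z. [:-z,1:]) (z#zs))) = [:-z,1:] * smult (lead_coeff Q') (prod_list (map (\<lambda>z. [:-z,1:]) zs))"
    by (simp add: lc)
  show ?case by (rule trans[OF Qeq e[symmetric]])
qed

lemma coeff_mult_quad:
  fixes p :: "real poly"
  shows "coeff (p * [:a,b,1:]) 0 = a * coeff p 0"
    and "coeff (p * [:a,b,1:]) (Suc 0) = a * coeff p 1 + b * coeff p 0"
    and "coeff (p * [:a,b,1:]) (Suc (Suc n)) = a * coeff p (n+2) + b * coeff p (n+1) + coeff p n"
  by (simp_all add: coeff_pCons)

definition inv :: "real \<Rightarrow> nat \<Rightarrow> real \<Rightarrow> real poly \<Rightarrow> bool" where
"inv \<epsilon> m R Q \<longleftrightarrow> degree Q = 2*m+1 \<and>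
   (\<forall>i\<le>m. 0 < \<epsilon>*(-1)^(i+m)*coeff Q (2*i) \<and> 0 < (-1)^(i+m)*coeff Q (2*i+1)) \<and>
   (\<forall>i. \<epsilon>*(-1)^(i+m)*coeff Q (2*i) \<le> R*((-1)^(i+m)*coeff Q (2*i+1)))"

lemma inv_step:
  assumes I: "inv \<epsilon> m R Q" and eps: "\<epsilon> = 1 \<or> \<epsilon> = -1"
    and R: "0 \<le> R" "R \<le> u" and u: "0 < u" "u \<le> v"
  shows "inv \<epsilon> (Suc m) v (Q * [:-(u*v), \<epsilon>*(v-u), 1:])"
proof -
  define Q' where "Q' = Q * [:-(u*v), \<epsilon>*(v-u), 1:]"
  define A where "A i = \<epsilon>*(-1)^(i+m)*coeff Q (2*i)" for i
  define B where "B i = (-1)^(i+m)*coeff Q (2*i+1)" for i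
  define A' where "A' i = \<epsilon>*(-1)^(i+Suc m)*coeff Q' (2*i)" for i
  define B' where "B' i = (-1)^(i+Suc m)*coeff Q' (2*i+1)" for i
  have degQ: "degree Q = 2*m+1" using I unfolding inv_def by simp
  have pos: "\<And>i. i \<le> m \<Longrightarrow> 0 < A i \<and> 0 < B i" using I unfolding inv_def A_def B_def by simp
  have le: "\<And>i. A i \<le> R * B i" using I unfolding inv_def A_def B_def by simp
  have zero: "\<And>i. m < i \<Longrightarrow> A i = 0 \<and> B i = 0"
    unfolding A_def B_def using degQ by (simp add: coeff_eq_0)
  have Anneg: "\<And>i. 0 \<le> A i" by (metis less_eq_real_def not_le pos zero)
  have Bnneg: "\<And>i. 0 \<le> B i" by (metis less_eq_real_def not_le pos zero)
  have A0: "A' 0 = u*v*A 0"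
    unfolding A'_def A_def Q'_def using coeff_mult_quad(1)[of Q] eps by auto
  have B0: "B' 0 = u*v*B 0 - (v-u)*A 0"
    unfolding B'_def B_def A_def Q'_def using coeff_mult_quad(2)[of Q] eps by (auto simp: algebra_simps)
  have AS: "A' (Suc i) = A i + (v-u)*B i + u*v*A(Suc i)" for i
  proof -
    have "coeff Q' (2*Suc i) = -(u*v) * coeff Q (2*Suc i) + \<epsilon>*(v-u)*coeff Q (2*i+1) + coeff Q (2*i)"
      unfolding Q'_def using coeff_mult_quad(3)[of Q _ _ "2*i"] by (simp add: mult_2)
    moreover have "A' (Suc i) = \<epsilon>*(-1)^(i+m) * coeff Q' (2*Suc i)" unfolding A'_def by simp
    ultimately have "A' (Suc i) = \<epsilon>*(-1)^(i+m) * (-(u*v) * coeff Q (2*Suc i) + \<epsilon>*(v-u)*coeff Q (2*i+1) + coeff Q (2*i))"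
      by simp
    then show ?thesis unfolding A_def B_def using eps by (auto simp: algebra_simps)
  qed
  have BS: "B' (Suc i) = B i - (v-u)*A(Suc i) + u*v*B (Suc i)" for i
  proof -
    have "coeff Q' (2*Suc i+1) = -(u*v) * coeff Q (2*Suc i+1) + \<epsilon>*(v-u)*coeff Q (2*Suc i) + coeff Q (2*i+1)"
      unfolding Q'_def using coeff_mult_quad(3)[of Q _ _ "2*i+1"] by (simp add: mult_2)
    moreover have "B' (Suc i) = (-1)^(i+m) * coeff Q' (2*Suc i+1)" unfolding B'_def by simp
    ultimately have "B' (Suc i) = (-1)^(i+m) * (-(u*v) * coeff Q (2*Suc i+1) + \<epsilon>*(v-u)*coeff Q (2*Suc i) + coeff Q (2*i+1))"
      by simp
    then show ?thesis unfolding A_def B_def using eps by (auto simp: algebra_simps)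
  qed
  have key: "(v-u)*A i \<le> (v-u)*R*B i" for i
    using le[of i] u by (simp add: mult_left_mono mult.assoc)
  have key2: "u*u*B i \<le> u*v*B i - (v-u)*R*B i" for i
  proof -
    have "0 \<le> (v-u)*(u-R)*B i" using u R Bnneg[of i] by simp
    then show ?thesis by (simp add: algebra_simps)
  qed
  have Bpos: "B' i \<ge> (if i = 0 then 0 else B (i-1)) + u*u*B i" for i
    using key[of i] key2[of i] B0 BS by (cases i) auto
  have degQ': "degree Q' = 2*Suc m+1"
  proof -
    have "Q \<noteq> 0" using pos[of 0] unfolding B_def by auto
    then have "degree Q' = degree Q + degree [:-(u*v), \<epsilon>*(v-u), 1::real:]"
      unfolding Q'_def by (intro degree_mult_eq) auto
    then show ?thesis using degQ by simp
  qed
  have pos': "0 < A' i \<and> 0 < B' i" if "i \<le> Suc m" for i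
  proof (cases i)
    case 0
    have "0 < A 0" "0 < B 0" using pos by auto
    moreover have "0 < u*u" "0 < u*v" using u by auto
    ultimately show ?thesis using A0 Bpos[of 0] 0
      by (smt (verit) mult_pos_pos)
  next
    case (Suc k)
    then have "0 < A k" "0 < B k" using pos that by auto
    moreover have "0 \<le> (v-u)*B k" "0 \<le> u*v*A (Suc k)" "0 \<le> u*u*B i"
      using u Anneg Bnneg by auto
    ultimately show ?thesis using AS[of k] Bpos[of i] Suc by auto
  qed
  have le': "A' i \<le> v * B' i" for i
  proof -
    have h1: "(if i = 0 then 0 else A (i-1)) \<le> u * (if i = 0 then 0 else B (i-1))"
      using le[of "i-1"] R Bnneg[of "i-1"] by (auto intro: order_trans[OF _ mult_right_mono])
    have h2: "v*v*A i \<le> u*v*v*B i"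
    proof -
      have "A i \<le> u * B i" using le[of i] R Bnneg[of i] by (auto intro: order_trans[OF _ mult_right_mono])
      then show ?thesis using mult_left_mono[of "A i" "u*B i" "v*v"] u by (simp add: algebra_simps)
    qed
    have "v * B' i - A' i = u * (if i = 0 then 0 else B (i-1)) - (if i = 0 then 0 else A (i-1)) + u*v*v*B i - v*v*A i"
    proof (cases i)
      case 0
      show ?thesis unfolding 0 A0 B0 by (simp add: algebra_simps)
    next
      case (Suc k)
      show ?thesis unfolding Suc AS BS by (simp add: algebra_simps)
    qed
    then show ?thesis using h1 h2 by linarith
  qed
  show ?thesis unfolding Q'_def[symmetric] inv_def
    using degQ' pos' le' unfolding A'_def B'_def by auto
qed

lemma lin_pair:
  assumes eps: "\<epsilon> = 1 \<or> \<epsilon> = -1" and a: "\<epsilon> * a > 0" and b: "\<epsilon> * b < 0"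
  shows "[:-a,1:] * [:-b,1::real:] = [:-(\<bar>a\<bar>*\<bar>b\<bar>), \<epsilon>*(\<bar>b\<bar>-\<bar>a\<bar>), 1:]"
  using eps a b by (auto simp: algebra_simps)

lemma inv_prefix:
  fixes zs :: "real list" and \<epsilon> :: real
  assumes eps: "\<epsilon> = 1 \<or> \<epsilon> = -1" and len: "length zs = 2*M+1" and srt: "sorted (map abs zs)"
    and sg: "\<forall>i < length zs. (even i \<longrightarrow> \<epsilon> * zs!i < 0) \<and> (odd i \<longrightarrow> \<epsilon>*zs!i > 0)"
  shows "m \<le> M \<Longrightarrow> inv \<epsilon> m \<bar>zs!(2*m)\<bar> (prod_list (map (\<lambda>z. [:-z,1:]) (take (2*m+1) zs)))"
proof (induction m)
  case 0
  have t: "take (2*0+1) zs = [zs!0]" using len by (simp add: take_Suc_conv_app_nth)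
  have z0: "\<epsilon> * zs!0 < 0" using sg len by auto
  have deg: "degree [:-(zs!0),1::real:] = 1" by simp
  have "\<forall>i. \<epsilon>*(-1)^(i+0)*coeff [:-(zs!0),1:] (2*i) \<le> \<bar>zs!(2*0)\<bar>*((-1)^(i+0)*coeff [:-(zs!0),1:] (2*i+1))"
  proof
    fix i :: nat
    show "\<epsilon>*(-1)^(i+0)*coeff [:-(zs!0),1:] (2*i) \<le> \<bar>zs!(2*0)\<bar>*((-1)^(i+0)*coeff [:-(zs!0),1:] (2*i+1))"
    proof (cases i)
      case 0 then show ?thesis using eps z0 by auto
    next
      case (Suc k)
      then have "coeff [:-(zs!0),1::real:] (2*i) = 0" "coeff [:-(zs!0),1::real:] (2*i+1) = 0"
        by (auto intro!: coeff_eq_0 simp: deg)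
      then show ?thesis by simp
    qed
  qed
  moreover have "0 < \<epsilon>*(-1)^(0+0)*coeff [:-(zs!0),1::real:] (2*0)" using z0 by simp
  ultimately show ?case unfolding t inv_def by simp
next
  case (Suc m)
  have lt: "2*m+2 < length zs" using Suc.prems len by simp
  define a where "a = zs!(2*m+1)"
  define b where "b = zs!(2*m+2)"
  have t: "take (2*Suc m+1) zs = take (2*m+1) zs @ [a, b]"
  proof -
    have "take (2*Suc m+1) zs = take (Suc (Suc (2*m+1))) zs" by simp
    also have "... = (take (2*m+1) zs @ [a]) @ [b]"
      using lt unfolding a_def b_def by (simp add: take_Suc_conv_app_nth)
    finally show ?thesis by simp
  qed
  have ea: "\<epsilon> * a > 0" using sg lt unfolding a_def by auto
  have eb: "\<epsilon> * b < 0" using sg lt unfolding b_def by auto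
  have s1: "\<bar>zs!(2*m)\<bar> \<le> \<bar>a\<bar>" using sorted_nth_mono[OF srt, of "2*m" "2*m+1"] lt unfolding a_def by simp
  have s2: "\<bar>a\<bar> \<le> \<bar>b\<bar>" using sorted_nth_mono[OF srt, of "2*m+1" "2*m+2"] lt unfolding a_def b_def by simp
  have a0: "0 < \<bar>a\<bar>" using ea by auto
  have I: "inv \<epsilon> m \<bar>zs!(2*m)\<bar> (prod_list (map (\<lambda>z. [:-z,1:]) (take (2*m+1) zs)))"
    using Suc by simp
  have "inv \<epsilon> (Suc m) \<bar>b\<bar> (prod_list (map (\<lambda>z. [:-z,1:]) (take (2*m+1) zs)) * [:-(\<bar>a\<bar>*\<bar>b\<bar>), \<epsilon>*(\<bar>b\<bar>-\<bar>a\<bar>), 1:])"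
    by (rule inv_step[OF I eps _ s1 a0 s2]) simp
  moreover have "prod_list (map (\<lambda>z. [:-z,1:]) (take (2*Suc m+1) zs)) =
     prod_list (map (\<lambda>z. [:-z,1:]) (take (2*m+1) zs)) * [:-(\<bar>a\<bar>*\<bar>b\<bar>), \<epsilon>*(\<bar>b\<bar>-\<bar>a\<bar>), 1:]"
    unfolding t using lin_pair[OF eps ea eb] by (simp add: mult.assoc)
  moreover have "zs!(2*Suc m) = b" unfolding b_def by simp
  ultimately show ?case by simp
qed

lemma sgn_from: "s = 1 \<or> s = -1 \<Longrightarrow> 0 < s * (x::real) \<Longrightarrow> sgn x = s"
  by (auto simp: sgn_if zero_less_mult_iff)

lemma neg1_pow: "(-1::real)^n = (if even n then 1 else -1)"
  by simp

lemma sgn_coeff: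
  assumes eps: "\<epsilon> = 1 \<or> \<epsilon> = -1" and I: "inv \<epsilon> M R F" and k: "k \<le> 2*M+1"
  shows "sgn (coeff F (2*M+1-k)) = (if even k then (if k mod 4 = 0 then 1 else -1) else (if k mod 4 = 1 then \<epsilon> else -\<epsilon>))"
proof (cases "even k")
  case True
  then obtain t where t: "k = 2*t" by blast
  have tM: "t \<le> M" using k t by simp
  have j: "2*M+1-k = 2*(M-t)+1" using t tM by simp
  have e: "(M-t)+M = 2*(M-t) + t" using tM by simp
  have "0 < (-1)^((M-t)+M) * coeff F (2*(M-t)+1)" using I unfolding inv_def by simp
  then have "0 < (-1)^t * coeff F (2*(M-t)+1)" unfolding e by (simp add: power_add)
  then have "sgn (coeff F (2*(M-t)+1)) = (-1)^t" by (intro sgn_from) (auto simp: neg1_pow)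
  moreover have "k mod 4 = 0 \<longleftrightarrow> even t" using t by presburger
  ultimately show ?thesis using True j by (simp add: neg1_pow)
next
  case False
  then obtain t where t: "k = 2*t+1" using oddE by blast
  have tM: "t \<le> M" using k t by simp
  have j: "2*M+1-k = 2*(M-t)" using t tM by simp
  have e: "(M-t)+M = 2*(M-t) + t" using tM by simp
  have "\<forall>i\<le>M. 0 < \<epsilon>*(-1)^(i+M)*coeff F (2*i)" using I unfolding inv_def by blast
  then have "0 < \<epsilon>*(-1)^((M-t)+M) * coeff F (2*(M-t))" using diff_le_self by blast
  then have "0 < (\<epsilon>*(-1)^t) * coeff F (2*(M-t))" unfolding e by (simp add: power_add)
  then have "sgn (coeff F (2*(M-t))) = \<epsilon>*(-1)^t" by (intro sgn_from) (use eps in \<open>auto simp: neg1_pow\<close>)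
  moreover have "k mod 4 = 1 \<longleftrightarrow> even t" using t by presburger
  ultimately show ?thesis using False j by (simp add: neg1_pow)
qed

lemma conclude:
  fixes Q :: "real poly"
  assumes eps: "\<epsilon> = 1 \<or> \<epsilon> = -1" and deg: "degree Q = 2*M+1" and lc: "lead_coeff Q > 0"
    and D: "defines_moae Q w" and w: "w = map (\<lambda>i. if even i then (if \<epsilon> = 1 then N else P) else (if \<epsilon> = 1 then P else N)) [0..<2*M+1]"
  shows "\<forall>k \<le> 2*M+1. sgn (coeff Q (2*M+1-k)) = (if even k then (if k mod 4 = 0 then 1 else -1) else (if k mod 4 = 1 then \<epsilon> else -\<epsilon>))"
proof -
  obtain zs where zs: "length zs = length w" "\<forall>x. count (mset zs) x = order x Q" "sorted (map abs zs)"
    "\<forall>i < length w. (w ! i = P \<longrightarrow> zs ! i > 0) \<and> (w ! i = N \<longrightarrow> zs ! i < 0)"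
    using D unfolding defines_moae_def by blast
  have len: "length zs = 2*M+1" using zs(1) w by simp
  have Qnz: "Q \<noteq> 0" using lc by auto
  have F: "Q = smult (lead_coeff Q) (prod_list (map (\<lambda>z. [:-z,1:]) zs))"
    using factor_roots[OF zs(2) _ Qnz] len deg by simp
  have sg: "\<forall>i < length zs. (even i \<longrightarrow> \<epsilon> * zs!i < 0) \<and> (odd i \<longrightarrow> \<epsilon>*zs!i > 0)"
  proof (intro allI impI)
    fix i assume i: "i < length zs"
    then have "(w ! i = P \<longrightarrow> zs ! i > 0) \<and> (w ! i = N \<longrightarrow> zs ! i < 0)" using zs(4) zs(1) by auto
    moreover have "w ! i = (if even i then (if \<epsilon> = 1 then N else P) else (if \<epsilon> = 1 then P else N))"
      using i len unfolding w by (simp del: upt_Suc)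
    ultimately show "(even i \<longrightarrow> \<epsilon> * zs!i < 0) \<and> (odd i \<longrightarrow> \<epsilon>*zs!i > 0)"
      using eps by (auto simp: mult_less_0_iff zero_less_mult_iff)
  qed
  have I: "inv \<epsilon> M \<bar>zs!(2*M)\<bar> (prod_list (map (\<lambda>z. [:-z,1:]) zs))"
    using inv_prefix[OF eps len zs(3) sg, of M] len by simp
  show ?thesis
  proof (intro allI impI)
    fix k assume k: "k \<le> 2*M+1"
    have "sgn (coeff Q (2*M+1-k)) = sgn (coeff (prod_list (map (\<lambda>z. [:-z,1:]) zs)) (2*M+1-k))"
      using lc by (subst F) (simp add: sgn_mult)
    then show "sgn (coeff Q (2*M+1-k)) = (if even k then (if k mod 4 = 0 then 1 else -1) else (if k mod 4 = 1 then \<epsilon> else -\<epsilon>))"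
      using sgn_coeff[OF eps I k] by simp
  qed
qed

theorem theorem1p10:
  fixes Q :: "real poly" and d :: nat
  assumes "d \<ge> 1" and "odd d"
    and "hyperbolic Q" and "degree Q = d"
    and "lead_coeff Q > 0" and "coeff Q 0 \<noteq> 0"
  shows "(defines_moae Q (r_PP0 d) \<longrightarrow>
            (\<forall>k \<le> d. coeff Q k \<noteq> 0) \<and> sign_pattern Q = Sigma_minus d)
       \<and> (defines_moae Q (r_NN0 d) \<longrightarrow>
            (\<forall>k \<le> d. coeff Q k \<noteq> 0) \<and> sign_pattern Q = Sigma_plus d)"
proof -
  obtain M where M: "d = 2*M+1" using assms(2) oddE by blast
  have nz: "\<forall>k \<le> d. coeff Q k \<noteq> 0"
    if H: "\<forall>k \<le> d. sgn (coeff Q (d-k)) = (if even k then (if k mod 4 = 0 then 1 else -1) else (if k mod 4 = 1 then \<epsilon> else -\<epsilon>))"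
      and eps: "\<epsilon> = 1 \<or> \<epsilon> = -1" for \<epsilon>
  proof (intro allI impI)
    fix k assume k: "k \<le> d"
    have "sgn (coeff Q (d-(d-k))) \<noteq> 0" using H[rule_format, of "d-k"] eps by auto
    then show "coeff Q k \<noteq> 0" using k by auto
  qed
  have A: "(\<forall>k \<le> d. coeff Q k \<noteq> 0) \<and> sign_pattern Q = Sigma_minus d" if D: "defines_moae Q (r_PP0 d)"
  proof -
    have H: "\<forall>k \<le> d. sgn (coeff Q (d-k)) = (if even k then (if k mod 4 = 0 then 1 else -1) else (if k mod 4 = 1 then -1 else -(-1::real)))"
      using conclude[where \<epsilon>="-1" and Q=Q and M=M and w="r_PP0 d"] D assms M unfolding r_PP0_def by simp
    have "sign_pattern Q = Sigma_minus d"
      unfolding sign_pattern_def Sigma_minus_def assms(4)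
    proof (intro map_cong refl)
      fix k assume "k \<in> set [0..<d+1]"
      then have "k \<le> d" by auto
      then show "sgn (coeff Q (d - k)) = (if k mod 4 = 0 \<or> k mod 4 = 3 then 1 else -1)"
        using H by (auto; presburger)
    qed
    then show ?thesis using nz[OF _, of "-1"] H by simp
  qed
  have B: "(\<forall>k \<le> d. coeff Q k \<noteq> 0) \<and> sign_pattern Q = Sigma_plus d" if D: "defines_moae Q (r_NN0 d)"
  proof -
    have H: "\<forall>k \<le> d. sgn (coeff Q (d-k)) = (if even k then (if k mod 4 = 0 then 1 else -1) else (if k mod 4 = 1 then 1 else -(1::real)))"
      using conclude[where \<epsilon>="1" and Q=Q and M=M and w="r_NN0 d"] D assms M unfolding r_NN0_def by simp
    have "sign_pattern Q = Sigma_plus d"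
      unfolding sign_pattern_def Sigma_plus_def assms(4)
    proof (intro map_cong refl)
      fix k assume "k \<in> set [0..<d+1]"
      then have "k \<le> d" by auto
      then show "sgn (coeff Q (d - k)) = (if k mod 4 = 0 \<or> k mod 4 = 1 then 1 else -1)"
        using H by (auto; presburger)
    qed
    then show ?thesis using nz[OF _, of "1"] H by simp
  qed
  show ?thesis using A B by blast
qed

end
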